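(* Assume the setting and notation described in the context, and suppose the event $\mathcal{E}$ holds. There exist absolute constants $C_1, C_2>0$ such that the following holds. For any $\gamma\in(0,1)$, if $$ m \ \ge\ C_1 \frac{(1+\theta)^2}{\theta^2 \gamma^2(1-\sqrt{\gamma})^2} \max_{1\le p \le k}p\, s^2(p)\log n, $$ then the final selected support $S^{(k)}$ of the SEP algorithm satisfies $\|\mathbf{v}_{S^{(k)}}\|_2\ge \sqrt{\gamma}$, and the output $\hat{\mathbf{v}}$ of SEP satisfies $$ \sin\angle(\hat{\mathbf{v}},\mathbf{v})\ \le\ \sqrt{1-\gamma} + \frac{C_2(1+\theta)}{\theta \gamma}\sqrt{\frac{k\log n}{m}}. $$
   Context: Let $n\ge 2$, $m\ge 1$, $\theta>0$, $k\in\{1,\dots,n\}$. Let $\mathbf{v}\in\mathbb{R}^n$ with $\|\mathbf{v}\|_2=1$ and at most $k$ nonzero entries. Let $\mathbf{x}_1,\dots,\mathbf{x}_m$ be i.i.d. $\mathcal{N}(\mathbf{0},\boldsymbol{\Sigma})$ with $\boldsymbol{\Sigma}=\mathbf{I}_n+\theta\mathbf{v}\mathbf{v}^\top$. Put $\hat{\boldsymbol{\Sigma}}=\frac1m\sum_{i=1}^m\mathbf{x}_i\mathbf{x}_i^\top$, $\hat{\boldsymbol{\Gamma}}=\hat{\boldsymbol{\Sigma}}-\mathbf{I}_n$, and $\mathbf{W}=\hat{\boldsymbol{\Gamma}}-\theta\mathbf{v}\mathbf{v}^\top$. For $S,U\subseteq[n]=\{1,\dots,n\}$, $\mathbf{A}_{S,U}$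 is the submatrix with rows in $S$ and columns in $U$, and $\mathbf{v}_S$ is the restriction of $\mathbf{v}$ to $S$. $\|\cdot\|_2$ is the Euclidean norm for vectors and the spectral norm for matrices. Let $v_{(1)}\ge v_{(2)}\ge\cdots$ be the absolute values of the entries of $\mathbf{v}$ sorted decreasingly, and define the structure function $s(p)=\big(\sum_{i=1}^p v_{(i)}^2\big)^{-1}$ for $1\le p\le k$. For unit vectors $\mathbf{a},\mathbf{b}$, $\sin\angle(\mathbf{a},\mathbf{b})=\sqrt{1-\langle\mathbf{a},\mathbf{b}\rangle^2}$. Fix an absolute constant $C_0>0$; the event $\mathcal{E}$ is: for every $p\in[n]$ and every $S\subseteq[n]$ with $|S|=p$, $\|\mathbf{W}_{S,S}\|_2\le C_0(1+\theta)\sqrt{p\log n/m}$. "Absolute constant" means a number not depending on $n,m,k,\theta,\mathbf{v},\gamma$. SEP algorithm (input $\hat{\boldsymbol{\Gamma}}$ and $k$): set $S^{(1)}=\{j^\ast\}$ where $j^\ast$ maximizes $|\hat{\boldsymbol{\Gamma}}_{jj}|$. For $p=1,\dots,k-1$: let $\hat{\mathbf{e}}^{(p)}$ be a unit eigenvector for the largest eigenvalue of $\hat{\boldsymbol{\Gamma}}_{S^{(p)},S^{(p)}}$, zero-padded to $\mathbb{R}^n$; let $\mathbf{u}^{(p)}=\hat{\boldsymbol{\Gamma}}\hat{\mathbf{e}}^{(p)}$; let $S^{(p+1)}$ be the indices of the $p+1$ largest entries of $|\mathbf{u}^{(p)}|$. Output $\hat{\mathbf{v}}$: a unit eigenvector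 for the largest eigenvalue of $\hat{\boldsymbol{\Gamma}}_{S^{(k)},S^{(k)}}$, zero-padded to $\mathbb{R}^n$. *)

theory Defs
  imports Complex_Main
begin

text \<open>Conventions: indices are 0-based, [n] is rendered as {..<n}.
Vectors are functions nat => real, matrices nat => nat => real;
only entries with indices in {..<n} are relevant.\<close>

definition sample_Gamma :: "nat \<Rightarrow> (nat \<Rightarrow> nat \<Rightarrow> real) \<Rightarrow> nat \<Rightarrow> nat \<Rightarrow> real" where
  "sample_Gamma m x i j = (1 / real m) * (\<Sum>l<m. x l i * x l j) - (if i = j then 1 else 0)"

definition spec_norm_sub :: "(nat \<Rightarrow> nat \<Rightarrow> real) \<Rightarrow> nat set \<Rightarrow> nat set \<Rightarrow> real" where
  "spec_norm_sub A S U =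
     Sup {sqrt (\<Sum>i\<in>S. (\<Sum>j\<in>U. A i j * y j)^2) | y. (\<Sum>j\<in>U. (y j)^2) = 1}"

definition event_E :: "real \<Rightarrow> nat \<Rightarrow> nat \<Rightarrow> real \<Rightarrow> (nat \<Rightarrow> nat \<Rightarrow> real) \<Rightarrow> bool" where
  "event_E C0 n m \<theta> W \<longleftrightarrow>
     (\<forall>p\<in>{1..n}. \<forall>S. S \<subseteq> {..<n} \<and> card S = p \<longrightarrow>
        spec_norm_sub W S S \<le> C0 * (1 + \<theta>) * sqrt (real p * ln (real n) / real m))"

definition is_eig_sub :: "(nat \<Rightarrow> nat \<Rightarrow> real) \<Rightarrow> nat set \<Rightarrow> real \<Rightarrow> (nat \<Rightarrow> real) \<Rightarrow> bool" where
  "is_eig_sub A S lam y \<longleftrightarrow> (\<exists>i\<in>S. y i \<noteq> 0) \<and> (\<forall>i\<in>S. (\<Sum>j\<in>S. A i j * y j) = lam * y i)"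

definition top_eigvec :: "(nat \<Rightarrow> nat \<Rightarrow> real) \<Rightarrow> nat set \<Rightarrow> (nat \<Rightarrow> real) \<Rightarrow> bool" where
  "top_eigvec A S e \<longleftrightarrow>
     (\<forall>i. i \<notin> S \<longrightarrow> e i = 0) \<and> (\<Sum>i\<in>S. (e i)^2) = 1 \<and>
     (\<exists>lam. is_eig_sub A S lam e \<and> (\<forall>mu y. is_eig_sub A S mu y \<longrightarrow> mu \<le> lam))"

definition top_entries :: "nat \<Rightarrow> (nat \<Rightarrow> real) \<Rightarrow> nat \<Rightarrow> nat set \<Rightarrow> bool" where
  "top_entries n u q T \<longleftrightarrow>
     T \<subseteq> {..<n} \<and> card T = q \<and> (\<forall>i\<in>T. \<forall>j\<in>{..<n} - T. \<bar>u j\<bar> \<le> \<bar>u i\<bar>)"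

text \<open>A valid run of SEP (any admissible tie-breaking / eigenvector choice):
  Sseq p = S^(p), e p = \<^emph>\<open>e\<close>^(p), vhat = output.\<close>
definition sep_run :: "(nat \<Rightarrow> nat \<Rightarrow> real) \<Rightarrow> nat \<Rightarrow> nat \<Rightarrow> (nat \<Rightarrow> nat set) \<Rightarrow>
                       (nat \<Rightarrow> nat \<Rightarrow> real) \<Rightarrow> (nat \<Rightarrow> real) \<Rightarrow> bool" where
  "sep_run G n k Sseq e vhat \<longleftrightarrow>
     (\<exists>j<n. Sseq 1 = {j} \<and> (\<forall>i<n. \<bar>G i i\<bar> \<le> \<bar>G j j\<bar>)) \<and>
     (\<forall>p\<in>{1..<k}. top_eigvec G (Sseq p) (e p) \<and>
        top_entries n (\<lambda>i. \<Sum>j<n. G i j * e p j) (p + 1) (Sseq (Suc p))) \<and>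
     top_eigvec G (Sseq k) vhat"

text \<open>Absolute values of entries of v sorted decreasingly; v_(i) = sorted_abs v n ! (i-1).\<close>
definition sorted_abs :: "(nat \<Rightarrow> real) \<Rightarrow> nat \<Rightarrow> real list" where
  "sorted_abs v n = rev (sort (map (\<lambda>i. \<bar>v i\<bar>) [0..<n]))"

definition struct_fun :: "(nat \<Rightarrow> real) \<Rightarrow> nat \<Rightarrow> nat \<Rightarrow> real" where
  "struct_fun v n p = 1 / (\<Sum>i=1..p. (sorted_abs v n ! (i - 1))^2)"

definition sin_angle :: "nat \<Rightarrow> (nat \<Rightarrow> real) \<Rightarrow> (nat \<Rightarrow> real) \<Rightarrow> real" where
  "sin_angle n a b = sqrt (1 - (\<Sum>i<n. a i * b i)^2)"

end

theory Submission
  imports Defs "HOL-Analysis.Analysis"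
begin

lemma sorted_abs_map:
  "sorted_abs v n = map (\<lambda>i. \<bar>v i\<bar>) (rev (sort_key (\<lambda>i. \<bar>v i\<bar>) [0..<n]))"
proof -
  let ?f = "\<lambda>i. \<bar>v i\<bar>"
  have "sort (map ?f [0..<n]) = map ?f (sort_key ?f [0..<n])"
    by (rule properties_for_sort) (simp_all add: mset_map)
  then show ?thesis unfolding sorted_abs_def by (simp add: rev_map)
qed

lemma top_set:
  assumes "q \<le> n"
  shows "\<exists>T. T \<subseteq> {..<n} \<and> card T = q \<and> (\<forall>i\<in>T. \<forall>j\<in>{..<n}-T. \<bar>v j\<bar> \<le> \<bar>v i\<bar>)
     \<and> (\<Sum>i\<in>T. (v i)^2) = (\<Sum>i=1..q. (sorted_abs v n ! (i-1))^2)"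
proof -
  let ?f = "\<lambda>i. \<bar>v i\<bar>"
  define ys where "ys = rev (sort_key ?f [0..<n])"
  have len: "length ys = n" and dis: "distinct ys" and st: "set ys = {..<n}"
    unfolding ys_def by (simp_all add: atLeast0LessThan)
  have sw: "sorted_wrt (\<lambda>a b. ?f b \<le> ?f a) ys"
  proof -
    have "sorted (map ?f (sort_key ?f [0..<n]))" by simp
    then have "sorted_wrt (\<lambda>a b. ?f a \<le> ?f b) (sort_key ?f [0..<n])"
      by (simp add: sorted_wrt_map)
    then show ?thesis unfolding ys_def by (simp add: sorted_wrt_rev)
  qed
  define T where "T = set (take q ys)"
  have "T \<subseteq> {..<n}" using set_take_subset[of q ys] st T_def by simp
  moreover have "card T = q" unfolding T_def using dis len assms
    by (simp add: distinct_card)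
  moreover have "\<forall>i\<in>T. \<forall>j\<in>{..<n}-T. \<bar>v j\<bar> \<le> \<bar>v i\<bar>"
  proof (intro ballI)
    fix i j assume i: "i \<in> T" and j: "j \<in> {..<n}-T"
    have "sorted_wrt (\<lambda>a b. ?f b \<le> ?f a) (take q ys @ drop q ys)" using sw by (simp only: append_take_drop_id)
    then have h: "\<forall>a\<in>set (take q ys). \<forall>b\<in>set (drop q ys). ?f b \<le> ?f a"
      by (simp only: sorted_wrt_append) blast
    have "j \<in> set (drop q ys)" using j st T_def
      by (metis Diff_iff Un_iff append_take_drop_id set_append)
    then show "\<bar>v j\<bar> \<le> \<bar>v i\<bar>" using h i T_def by blast
  qed
  moreover have "(\<Sum>i\<in>T. (v i)^2) = (\<Sum>i=1..q. (sorted_abs v n ! (i-1))^2)"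
  proof -
    have "(\<Sum>i=1..q. (sorted_abs v n ! (i-1))^2) = (\<Sum>i<q. (sorted_abs v n ! i)^2)"
      by (simp add: sum.atLeast1_atMost_eq)
    also have "\<dots> = (\<Sum>i<q. (v (ys ! i))^2)"
      using len assms by (simp add: sorted_abs_map ys_def[symmetric])
    also have "\<dots> = (\<Sum>i<q. (v (take q ys ! i))^2)"
      by (rule sum.cong) auto
    also have "\<dots> = sum_list (map (\<lambda>i. (v i)^2) (take q ys))"
      using len assms by (simp add: sum_list_sum_nth atLeast0LessThan)
    also have "\<dots> = (\<Sum>i\<in>T. (v i)^2)"
      unfolding T_def using dis by (simp add: sum.distinct_set_conv_list)
    finally show ?thesis by simp
  qed
  ultimately show ?thesis by blast
qed

lemma top_sum_ge:
  fixes u :: "nat \<Rightarrow> real"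
  assumes fA: "finite A" and fB: "finite B" and c: "card A = card B"
    and top: "\<forall>i\<in>A. \<forall>j\<in>B-A. \<bar>u j\<bar> \<le> \<bar>u i\<bar>"
  shows "(\<Sum>i\<in>B. (u i)^2) \<le> (\<Sum>i\<in>A. (u i)^2)"
proof -
  have sB: "(\<Sum>i\<in>B. (u i)^2) = (\<Sum>i\<in>A\<inter>B. (u i)^2) + (\<Sum>i\<in>B-A. (u i)^2)"
    using fB by (metis Int_commute sum.Int_Diff)
  have sA: "(\<Sum>i\<in>A. (u i)^2) = (\<Sum>i\<in>A\<inter>B. (u i)^2) + (\<Sum>i\<in>A-B. (u i)^2)"
    using fA by (metis sum.Int_Diff)
  have cc: "card (B-A) = card (A-B)"
    using c fA fB by (metis Int_commute card_Diff_subset_Int finite_Int inf_le1)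
  show ?thesis
  proof (cases "A - B = {}")
    case True
    have "card (B - A) = 0" using cc by (simp only: True card.empty)
    then have "B - A = {}" using fB by simp
    then have z1: "(\<Sum>i\<in>B-A. (u i)^2) = 0" by (simp only: sum.empty)
    have z2: "(\<Sum>i\<in>A-B. (u i)^2) = 0" using True by (simp only: sum.empty)
    show ?thesis using sA sB z1 z2 by linarith
  next
    case False
    define m where "m = Min ((\<lambda>i. (u i)^2) ` (A-B))"
    have "(\<Sum>i\<in>B-A. (u i)^2) \<le> of_nat (card (B-A)) * m"
    proof (rule sum_bounded_above)
      fix j assume j: "j \<in> B - A"
      show "(u j)^2 \<le> m" unfolding m_def
      proof (subst Min_ge_iff)
        show "finite ((\<lambda>i. (u i)^2) ` (A-B))" using fA by simp
        show "(\<lambda>i. (u i)^2) ` (A-B) \<noteq> {}" using False by simp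
        show "\<forall>a\<in>(\<lambda>i. (u i)^2) ` (A-B). (u j)^2 \<le> a"
        proof
          fix a assume "a \<in> (\<lambda>i. (u i)^2) ` (A-B)"
          then obtain i where i: "i \<in> A - B" "a = (u i)^2" by blast
          have "\<bar>u j\<bar> \<le> \<bar>u i\<bar>" using top i j by blast
          then show "(u j)^2 \<le> a" using i by (simp add: abs_le_square_iff)
        qed
      qed
    qed
    moreover have "of_nat (card (A-B)) * m \<le> (\<Sum>i\<in>A-B. (u i)^2)"
    proof (rule sum_bounded_below)
      fix i assume "i \<in> A - B"
      then show "m \<le> (u i)^2" unfolding m_def using fA by simp
    qed
    ultimately show ?thesis using sA sB cc by simp
  qed
qed



lemma sq_sum_zero:
  fixes y :: "nat \<Rightarrow> real"
  assumes "finite X" "(\<Sum>j\<in>X. (y j)^2) = 0"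
  shows "\<forall>j\<in>X. y j = 0"
  using assms by (simp add: sum_nonneg_eq_0_iff)

lemma spec_bound:
  fixes W :: "nat \<Rightarrow> nat \<Rightarrow> real"
  assumes fin: "finite X" and sp: "spec_norm_sub W X X \<le> B"
  shows "(\<Sum>i\<in>X. (\<Sum>j\<in>X. W i j * y j)^2) \<le> B^2 * (\<Sum>j\<in>X. (y j)^2)"
proof (cases "(\<Sum>j\<in>X. (y j)^2) = 0")
  case True
  then have "\<forall>j\<in>X. y j = 0" using fin sq_sum_zero by blast
  then have "(\<Sum>i\<in>X. (\<Sum>j\<in>X. W i j * y j)^2) = 0" by simp
  then show ?thesis using True by simp
next
  case False
  define s where "s = (\<Sum>j\<in>X. (y j)^2)"
  have "s \<ge> 0" unfolding s_def by (intro sum_nonneg) simp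
  then have spos: "s > 0" using False s_def by linarith
  define z where "z = (\<lambda>j. y j / sqrt s)"
  have z1: "(\<Sum>j\<in>X. (z j)^2) = 1"
  proof -
    have "(\<Sum>j\<in>X. (z j)^2) = (\<Sum>j\<in>X. (y j)^2 / s)"
      unfolding z_def using spos by (simp add: power_divide)
    also have "\<dots> = (\<Sum>j\<in>X. (y j)^2) / s" by (simp add: sum_divide_distrib)
    also have "\<dots> = 1" using spos unfolding s_def[symmetric] by simp
    finally show ?thesis .
  qed
  have zW: "(\<Sum>i\<in>X. (\<Sum>j\<in>X. W i j * z j)^2) = (\<Sum>i\<in>X. (\<Sum>j\<in>X. W i j * y j)^2) / s"
  proof -
    have "\<And>i. (\<Sum>j\<in>X. W i j * z j) = (\<Sum>j\<in>X. W i j * y j) / sqrt s"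
      unfolding z_def by (simp add: sum_divide_distrib)
    then have "\<And>i. (\<Sum>j\<in>X. W i j * z j)^2 = (\<Sum>j\<in>X. W i j * y j)^2 / s"
      using spos by (simp add: power_divide)
    then show ?thesis by (simp add: sum_divide_distrib)
  qed
  let ?Set = "{sqrt (\<Sum>i\<in>X. (\<Sum>j\<in>X. W i j * y j)^2) | y. (\<Sum>j\<in>X. (y j)^2) = 1}"
  have mem: "sqrt (\<Sum>i\<in>X. (\<Sum>j\<in>X. W i j * z j)^2) \<in> ?Set" using z1 by blast
  have bdd: "bdd_above ?Set"
  proof (rule bdd_aboveI)
    fix r assume "r \<in> ?Set"
    then obtain w where w: "(\<Sum>j\<in>X. (w j)^2) = 1" and r: "r = sqrt (\<Sum>i\<in>X. (\<Sum>j\<in>X. W i j * w j)^2)"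
      by blast
    have "\<And>i. (\<Sum>j\<in>X. W i j * w j)^2 \<le> (\<Sum>j\<in>X. (W i j)^2)"
      using Cauchy_Schwarz_ineq_sum[of "W _" w X] w by simp
    then have "(\<Sum>i\<in>X. (\<Sum>j\<in>X. W i j * w j)^2) \<le> (\<Sum>i\<in>X. \<Sum>j\<in>X. (W i j)^2)"
      by (rule sum_mono)
    then show "r \<le> sqrt (\<Sum>i\<in>X. \<Sum>j\<in>X. (W i j)^2)" unfolding r by (rule real_sqrt_le_mono)
  qed
  have le: "sqrt (\<Sum>i\<in>X. (\<Sum>j\<in>X. W i j * z j)^2) \<le> B"
    using cSup_upper[OF mem bdd] sp unfolding spec_norm_sub_def by linarith
  have nn: "0 \<le> (\<Sum>i\<in>X. (\<Sum>j\<in>X. W i j * z j)^2)" by (intro sum_nonneg) simp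
  have "(\<Sum>i\<in>X. (\<Sum>j\<in>X. W i j * z j)^2) \<le> B^2"
  proof -
    have "(sqrt (\<Sum>i\<in>X. (\<Sum>j\<in>X. W i j * z j)^2))^2 \<le> B^2"
      by (rule power_mono[OF le]) (simp add: nn)
    then show ?thesis using nn by simp
  qed
  then have "(\<Sum>i\<in>X. (\<Sum>j\<in>X. W i j * y j)^2) / s \<le> B^2" using zW by simp
  then show ?thesis using spos unfolding s_def[symmetric] by (simp add: divide_le_eq mult.commute)
qed

lemma quad_bound:
  fixes W :: "nat \<Rightarrow> nat \<Rightarrow> real"
  assumes fin: "finite X" and sp: "spec_norm_sub W X X \<le> B" and B: "B \<ge> 0"
  shows "\<bar>\<Sum>i\<in>X. y i * (\<Sum>j\<in>X. W i j * y j)\<bar> \<le> B * (\<Sum>j\<in>X. (y j)^2)"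
proof -
  define s where "s = (\<Sum>j\<in>X. (y j)^2)"
  have s0: "s \<ge> 0" unfolding s_def by (intro sum_nonneg) simp
  have "(\<Sum>i\<in>X. y i * (\<Sum>j\<in>X. W i j * y j))^2 \<le> s * (\<Sum>i\<in>X. (\<Sum>j\<in>X. W i j * y j)^2)"
    unfolding s_def by (rule Cauchy_Schwarz_ineq_sum)
  also have "\<dots> \<le> s * (B^2 * s)"
    using spec_bound[OF fin sp, of y] s0 unfolding s_def by (simp add: mult_left_mono)
  also have "\<dots> = (B * s)^2" by (simp add: power2_eq_square)
  finally have "(\<Sum>i\<in>X. y i * (\<Sum>j\<in>X. W i j * y j))^2 \<le> (B * s)^2" .
  then have "\<bar>\<Sum>i\<in>X. y i * (\<Sum>j\<in>X. W i j * y j)\<bar> \<le> \<bar>B * s\<bar>"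
    by (simp only: abs_le_square_iff)
  then show ?thesis unfolding s_def[symmetric] using B s0 by simp
qed


definition Qf :: "(nat \<Rightarrow> nat \<Rightarrow> real) \<Rightarrow> nat set \<Rightarrow> (nat \<Rightarrow> real) \<Rightarrow> real" where
  "Qf A S y = (\<Sum>i\<in>S. y i * (\<Sum>j\<in>S. A i j * y j))"

lemma bilin_sym:
  fixes A :: "nat \<Rightarrow> nat \<Rightarrow> real"
  assumes sym: "\<forall>i\<in>S. \<forall>j\<in>S. A i j = A j i"
  shows "(\<Sum>i\<in>S. x i * (\<Sum>j\<in>S. A i j * y j)) = (\<Sum>i\<in>S. y i * (\<Sum>j\<in>S. A i j * x j))"
proof -
  have "(\<Sum>i\<in>S. x i * (\<Sum>j\<in>S. A i j * y j)) = (\<Sum>i\<in>S. \<Sum>j\<in>S. x i * A i j * y j)"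
    by (simp add: sum_distrib_left mult.assoc)
  also have "\<dots> = (\<Sum>j\<in>S. \<Sum>i\<in>S. x i * A i j * y j)" by (rule sum.swap)
  also have "\<dots> = (\<Sum>j\<in>S. \<Sum>i\<in>S. y j * (A j i * x i))"
    using sym by (intro sum.cong refl) (simp add: mult.commute mult.left_commute)
  also have "\<dots> = (\<Sum>j\<in>S. y j * (\<Sum>i\<in>S. A j i * x i))"
    by (simp add: sum_distrib_left)
  finally show ?thesis .
qed

lemma Q_add:
  fixes A :: "nat \<Rightarrow> nat \<Rightarrow> real"
  assumes sym: "\<forall>i\<in>S. \<forall>j\<in>S. A i j = A j i"
  shows "Qf A S (\<lambda>i. y i + t * g i) = Qf A S y + 2 * t * (\<Sum>i\<in>S. g i * (\<Sum>j\<in>S. A i j * y j)) + t^2 * Qf A S g"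
proof -
  have inner: "\<And>i. (\<Sum>j\<in>S. A i j * (y j + t * g j)) = (\<Sum>j\<in>S. A i j * y j) + t * (\<Sum>j\<in>S. A i j * g j)"
    by (simp add: sum.distrib sum_distrib_left distrib_left mult.left_commute)
  have "Qf A S (\<lambda>i. y i + t * g i) = (\<Sum>i\<in>S. (y i + t * g i) * ((\<Sum>j\<in>S. A i j * y j) + t * (\<Sum>j\<in>S. A i j * g j)))"
    unfolding Qf_def using inner by simp
  also have "\<dots> = (\<Sum>i\<in>S. y i * (\<Sum>j\<in>S. A i j * y j)) + t * (\<Sum>i\<in>S. y i * (\<Sum>j\<in>S. A i j * g j))
      + t * (\<Sum>i\<in>S. g i * (\<Sum>j\<in>S. A i j * y j)) + t^2 * (\<Sum>i\<in>S. g i * (\<Sum>j\<in>S. A i j * g j))"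
    by (simp add: sum.distrib sum_distrib_left algebra_simps power2_eq_square)
  also have "(\<Sum>i\<in>S. y i * (\<Sum>j\<in>S. A i j * g j)) = (\<Sum>i\<in>S. g i * (\<Sum>j\<in>S. A i j * y j))"
    by (rule bilin_sym[OF sym])
  finally show ?thesis unfolding Qf_def by simp
qed

lemma N_add:
  fixes y g :: "nat \<Rightarrow> real"
  shows "(\<Sum>i\<in>S. (y i + t * g i)^2) = (\<Sum>i\<in>S. (y i)^2) + 2 * t * (\<Sum>i\<in>S. y i * g i) + t^2 * (\<Sum>i\<in>S. (g i)^2)"
  by (simp add: sum.distrib sum_distrib_left algebra_simps power2_eq_square)

lemma Q_scale:
  fixes A :: "nat \<Rightarrow> nat \<Rightarrow> real"
  shows "Qf A S (\<lambda>i. c * x i) = c^2 * Qf A S x"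
  unfolding Qf_def by (simp add: sum_distrib_left algebra_simps power2_eq_square)

lemma Q_cong:
  assumes "\<forall>i\<in>S. x i = y i"
  shows "Qf A S x = Qf A S y"
  unfolding Qf_def using assms by (intro sum.cong refl) (simp_all)

lemma compact_K:
  fixes S :: "nat set"
  shows "compact ({y::nat\<Rightarrow>real. \<forall>i. y i \<in> (if i \<in> S then {-1..1} else {0})} \<inter> {y. (\<Sum>i\<in>S. (y i)^2) = 1})"
proof (rule compact_Int_closed)
  let ?B = "\<lambda>i::nat. if i \<in> S then {-1..1::real} else {0}"
  have "compactin (product_topology (\<lambda>i. euclidean) UNIV) (PiE UNIV ?B)"
    by (subst compactin_PiE) auto
  then have "compact (PiE UNIV ?B)"
    by (simp add: euclidean_product_topology)
  moreover have "PiE UNIV ?B = {y::nat\<Rightarrow>real. \<forall>i. y i \<in> ?B i}"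
    by (simp add: PiE_UNIV_domain Pi_def)
  ultimately show "compact {y::nat\<Rightarrow>real. \<forall>i. y i \<in> ?B i}" by simp
  show "closed {y::nat\<Rightarrow>real. (\<Sum>i\<in>S. (y i)^2) = 1}"
    by (rule closed_Collect_eq) (intro continuous_intros continuous_on_product_coordinates)+
qed

lemma eig_exists:
  fixes A :: "nat \<Rightarrow> nat \<Rightarrow> real"
  assumes fin: "finite S" and sym: "\<forall>i\<in>S. \<forall>j\<in>S. A i j = A j i"
    and z: "(\<Sum>i\<in>S. (z i)^2) = 1"
  shows "\<exists>mu y. is_eig_sub A S mu y \<and> Qf A S z \<le> mu"
proof -
  define K where "K = {y::nat\<Rightarrow>real. \<forall>i. y i \<in> (if i \<in> S then {-1..1} else {0})} \<inter> {y. (\<Sum>i\<in>S. (y i)^2) = 1}"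
  have cK: "compact K" unfolding K_def by (rule compact_K)
  have memK: "w \<in> K" if w0: "\<forall>i. i \<notin> S \<longrightarrow> w i = 0" and w1: "(\<Sum>i\<in>S. (w i)^2) = 1" for w
  proof -
    have "\<forall>i\<in>S. \<bar>w i\<bar> \<le> 1"
    proof
      fix i assume i: "i \<in> S"
      have "(w i)^2 \<le> (\<Sum>i\<in>S. (w i)^2)" using fin i by (intro member_le_sum) auto
      then have "(w i)^2 \<le> 1" using w1 by simp
      then show "\<bar>w i\<bar> \<le> 1" by (simp add: abs_square_le_1)
    qed
    then show ?thesis unfolding K_def using w0 w1 by (auto simp: abs_le_iff)
  qed
  have inK: "\<forall>i. i \<notin> S \<longrightarrow> w i = 0" "(\<Sum>i\<in>S. (w i)^2) = 1" if "w \<in> K" for w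
    using that unfolding K_def by (auto split: if_splits)
  define z' where "z' = (\<lambda>i. if i \<in> S then z i else 0)"
  have z'K: "z' \<in> K" by (rule memK) (use z in \<open>auto simp: z'_def\<close>)
  have "continuous_on K (Qf A S)"
    unfolding Qf_def by (intro continuous_intros; rule continuous_on_subset[OF continuous_on_product_coordinates]; simp)
  then obtain y where yK: "y \<in> K" and ymax: "\<forall>w\<in>K. Qf A S w \<le> Qf A S y"
    using continuous_attains_sup[OF cK _] z'K by blast
  define M where "M = Qf A S y"
  have y1: "(\<Sum>i\<in>S. (y i)^2) = 1" using inK[OF yK] by simp
  have hom: "Qf A S x \<le> M * (\<Sum>i\<in>S. (x i)^2)" for x
  proof (cases "(\<Sum>i\<in>S. (x i)^2) = 0")
    case True
    then have "\<forall>j\<in>S. x j = 0" using fin sq_sum_zero by blast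
    then have "Qf A S x = 0" unfolding Qf_def by simp
    then show ?thesis using True by simp
  next
    case False
    define s where "s = (\<Sum>i\<in>S. (x i)^2)"
    have "s \<ge> 0" unfolding s_def by (intro sum_nonneg) simp
    then have spos: "s > 0" using False s_def by linarith
    define w where "w = (\<lambda>i. if i \<in> S then x i / sqrt s else 0)"
    have w1: "(\<Sum>i\<in>S. (w i)^2) = 1"
    proof -
      have "(\<Sum>i\<in>S. (w i)^2) = (\<Sum>i\<in>S. (x i)^2 / s)"
        unfolding w_def using spos by (intro sum.cong refl) (simp add: power_divide)
      also have "\<dots> = (\<Sum>i\<in>S. (x i)^2) / s" by (simp add: sum_divide_distrib)
      also have "\<dots> = 1" using spos unfolding s_def[symmetric] by simp
      finally show ?thesis .
    qed
    have "w \<in> K" by (rule memK) (use w1 in \<open>auto simp: w_def\<close>)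
    then have "Qf A S w \<le> M" using ymax M_def by blast
    moreover have "Qf A S w = (1 / sqrt s)^2 * Qf A S x"
    proof -
      have "Qf A S w = Qf A S (\<lambda>i. (1 / sqrt s) * x i)"
        by (rule Q_cong) (simp add: w_def)
      then show ?thesis using Q_scale[of A S "1 / sqrt s" x] by simp
    qed
    ultimately have "Qf A S x / s \<le> M" using spos by (simp add: power_divide)
    then show ?thesis using spos unfolding s_def[symmetric] by (simp add: divide_le_eq mult.commute)
  qed
  define g where "g = (\<lambda>i. (\<Sum>j\<in>S. A i j * y j) - M * y i)"
  define Gs where "Gs = (\<Sum>i\<in>S. (g i)^2)"
  have Gs0: "Gs \<ge> 0" unfolding Gs_def by (intro sum_nonneg) simp
  have key: "2 * t * Gs + t^2 * (Qf A S g - M * Gs) \<le> 0" for t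
  proof -
    have "Qf A S (\<lambda>i. y i + t * g i) \<le> M * (\<Sum>i\<in>S. (y i + t * g i)^2)" by (rule hom)
    then have "M + 2 * t * (\<Sum>i\<in>S. g i * (\<Sum>j\<in>S. A i j * y j)) + t^2 * Qf A S g
        \<le> M * (1 + 2 * t * (\<Sum>i\<in>S. y i * g i) + t^2 * Gs)"
      unfolding Q_add[OF sym] N_add y1 Gs_def M_def by simp
    moreover have "(\<Sum>i\<in>S. g i * (\<Sum>j\<in>S. A i j * y j)) - M * (\<Sum>i\<in>S. y i * g i) = Gs"
    proof -
      have "(\<Sum>i\<in>S. g i * (\<Sum>j\<in>S. A i j * y j)) - M * (\<Sum>i\<in>S. y i * g i)
          = (\<Sum>i\<in>S. g i * ((\<Sum>j\<in>S. A i j * y j) - M * y i))"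
        by (simp add: sum_subtractf sum_distrib_left algebra_simps)
      also have "\<dots> = Gs" unfolding Gs_def g_def by (simp add: power2_eq_square)
      finally show ?thesis .
    qed
    ultimately show ?thesis by (simp add: algebra_simps)
  qed
  have G0: "Gs = 0"
  proof (rule ccontr)
    assume "Gs \<noteq> 0"
    then have Gp: "Gs > 0" using Gs0 by simp
    define c where "c = Qf A S g - M * Gs"
    define t where "t = Gs / (\<bar>c\<bar> + 1)"
    have tp: "t > 0" unfolding t_def using Gp by simp
    have "2 * t * Gs + t^2 * c \<le> 0" using key[of t] c_def by simp
    then have "t * (2 * Gs + t * c) \<le> 0" by (simp add: algebra_simps power2_eq_square)
    then have h1: "2 * Gs + t * c \<le> 0" using tp by (simp add: mult_le_0_iff)
    have "t * \<bar>c\<bar> \<le> Gs"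
    proof -
      have "t * \<bar>c\<bar> = Gs * (\<bar>c\<bar> / (\<bar>c\<bar> + 1))" unfolding t_def by simp
      also have "\<dots> \<le> Gs * 1" using Gp by (intro mult_left_mono) simp_all
      finally show ?thesis by simp
    qed
    moreover have "- (t * \<bar>c\<bar>) \<le> t * c" using tp
      by (metis abs_ge_minus_self abs_mult abs_of_pos minus_le_iff)
    ultimately show False using h1 Gp by linarith
  qed
  have geq: "\<forall>i\<in>S. (\<Sum>j\<in>S. A i j * y j) = M * y i"
  proof
    fix i assume "i \<in> S"
    then have "g i = 0" using G0 fin sq_sum_zero unfolding Gs_def by blast
    then show "(\<Sum>j\<in>S. A i j * y j) = M * y i" unfolding g_def by simp
  qed
  have "\<exists>i\<in>S. y i \<noteq> 0"
  proof (rule ccontr)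
    assume "\<not> (\<exists>i\<in>S. y i \<noteq> 0)"
    then have "(\<Sum>i\<in>S. (y i)^2) = 0" by simp
    then show False using y1 by simp
  qed
  then have "is_eig_sub A S M y" unfolding is_eig_sub_def using geq by blast
  moreover have "Qf A S z \<le> M" using hom[of z] z by simp
  ultimately show ?thesis by blast
qed


lemma QGW:
  fixes G W :: "nat \<Rightarrow> nat \<Rightarrow> real"
  assumes GW: "\<forall>i j. G i j = \<theta> * v i * v j + W i j"
  shows "Qf G S x = \<theta> * (\<Sum>i\<in>S. x i * v i)^2 + Qf W S x"
proof -
  have inner: "\<And>i. (\<Sum>j\<in>S. G i j * x j) = \<theta> * v i * (\<Sum>j\<in>S. x j * v j) + (\<Sum>j\<in>S. W i j * x j)"
    using GW by (simp add: sum.distrib sum_distrib_left algebra_simps)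
  have "Qf G S x = (\<Sum>i\<in>S. x i * (\<theta> * v i * (\<Sum>j\<in>S. x j * v j) + (\<Sum>j\<in>S. W i j * x j)))"
    unfolding Qf_def using inner by simp
  also have "\<dots> = \<theta> * (\<Sum>i\<in>S. x i * v i) * (\<Sum>j\<in>S. x j * v j) + Qf W S x"
    unfolding Qf_def by (simp add: sum.distrib distrib_left sum_distrib_right sum_distrib_left algebra_simps)
  finally show ?thesis by (simp add: power2_eq_square)
qed

lemma eig_facts:
  fixes G W :: "nat \<Rightarrow> nat \<Rightarrow> real" and v e :: "nat \<Rightarrow> real"
  assumes fin: "finite S" and symG: "\<forall>i\<in>S. \<forall>j\<in>S. G i j = G j i"
    and te: "top_eigvec G S e"
    and GW: "\<forall>i j. G i j = \<theta> * v i * v j + W i j"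
    and qb: "\<forall>y. \<bar>Qf W S y\<bar> \<le> E * (\<Sum>i\<in>S. (y i)^2)"
    and apos: "(\<Sum>i\<in>S. (v i)^2) > 0"
  shows "\<exists>lam. (\<forall>i\<in>S. (\<Sum>j\<in>S. G i j * e j) = lam * e i) \<and>
           \<theta> * (\<Sum>i\<in>S. (v i)^2) - E \<le> lam \<and> lam - E \<le> \<theta> * (\<Sum>i\<in>S. e i * v i)^2"
proof -
  obtain lam where e0: "\<forall>i. i \<notin> S \<longrightarrow> e i = 0" and e1: "(\<Sum>i\<in>S. (e i)^2) = 1"
    and eig: "is_eig_sub G S lam e" and mx: "\<forall>mu y. is_eig_sub G S mu y \<longrightarrow> mu \<le> lam"
    using te unfolding top_eigvec_def by blast
  have eq: "\<forall>i\<in>S. (\<Sum>j\<in>S. G i j * e j) = lam * e i" using eig unfolding is_eig_sub_def by blast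
  define \<alpha> where "\<alpha> = (\<Sum>i\<in>S. (v i)^2)"
  have ap: "\<alpha> > 0" using apos \<alpha>_def by simp
  define z where "z = (\<lambda>i. v i / sqrt \<alpha>)"
  have z1: "(\<Sum>i\<in>S. (z i)^2) = 1"
  proof -
    have "(\<Sum>i\<in>S. (z i)^2) = (\<Sum>i\<in>S. (v i)^2 / \<alpha>)"
      unfolding z_def using ap by (intro sum.cong refl) (simp add: power_divide)
    also have "\<dots> = (\<Sum>i\<in>S. (v i)^2) / \<alpha>" by (simp add: sum_divide_distrib)
    also have "\<dots> = 1" using ap unfolding \<alpha>_def[symmetric] by simp
    finally show ?thesis .
  qed
  obtain mu y where my: "is_eig_sub G S mu y" and zm: "Qf G S z \<le> mu"
    using eig_exists[OF fin symG z1] by blast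
  have mul: "mu \<le> lam" using mx my by blast
  have zv: "(\<Sum>i\<in>S. z i * v i) = sqrt \<alpha>"
  proof -
    have "(\<Sum>i\<in>S. z i * v i) = (\<Sum>i\<in>S. (v i)^2) / sqrt \<alpha>"
      unfolding z_def by (simp add: sum_divide_distrib power2_eq_square)
    also have "\<dots> = \<alpha> / sqrt \<alpha>" unfolding \<alpha>_def by simp
    also have "\<dots> = sqrt \<alpha>" using ap by (simp add: real_div_sqrt)
    finally show ?thesis .
  qed
  have "Qf G S z = \<theta> * \<alpha> + Qf W S z" using QGW[OF GW, of S z] zv ap by simp
  moreover have "Qf W S z \<ge> - E"
  proof -
    have "\<bar>Qf W S z\<bar> \<le> E * (\<Sum>i\<in>S. (z i)^2)" using qb by blast
    then show ?thesis using z1 by simp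
  qed
  ultimately have lb: "\<theta> * \<alpha> - E \<le> lam" using zm mul by linarith
  have "Qf G S e = (\<Sum>i\<in>S. e i * (lam * e i))" unfolding Qf_def using eq by simp
  also have "\<dots> = lam * (\<Sum>i\<in>S. (e i)^2)" by (simp add: sum_distrib_left power2_eq_square mult.left_commute)
  also have "\<dots> = lam" using e1 by simp
  finally have "lam = \<theta> * (\<Sum>i\<in>S. e i * v i)^2 + Qf W S e" using QGW[OF GW, of S e] by simp
  moreover have "Qf W S e \<le> E"
  proof -
    have "\<bar>Qf W S e\<bar> \<le> E * (\<Sum>i\<in>S. (e i)^2)" using qb by blast
    then show ?thesis using e1 by simp
  qed
  ultimately have "lam - E \<le> \<theta> * (\<Sum>i\<in>S. e i * v i)^2" by linarith
  then have "(\<forall>i\<in>S. (\<Sum>j\<in>S. G i j * e j) = lam * e i) \<and>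
           \<theta> * (\<Sum>i\<in>S. (v i)^2) - E \<le> lam \<and> lam - E \<le> \<theta> * (\<Sum>i\<in>S. e i * v i)^2"
    using eq lb unfolding \<alpha>_def by simp
  then show ?thesis by (rule exI)
qed

lemma sin_lemma:
  fixes e v g :: "nat \<Rightarrow> real"
  assumes e1: "(\<Sum>i\<in>S. (e i)^2) = 1"
    and eig: "\<forall>i\<in>S. \<theta> * v i * c + g i = lam * e i"
    and c: "c = (\<Sum>i\<in>S. e i * v i)"
    and gb: "(\<Sum>i\<in>S. (g i)^2) \<le> E^2"
    and al: "\<alpha> = (\<Sum>i\<in>S. (v i)^2)" "\<alpha> \<ge> 0"
  shows "lam^2 * (\<alpha> - c^2) \<le> \<alpha> * E^2"
proof -
  have gi: "\<forall>i\<in>S. g i = lam * e i - \<theta> * c * v i"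
  proof
    fix i assume "i \<in> S"
    then have "\<theta> * v i * c + g i = lam * e i" using eig by blast
    then show "g i = lam * e i - \<theta> * c * v i" by (simp add: algebra_simps)
  qed
  have "(\<Sum>i\<in>S. (g i)^2) = (\<Sum>i\<in>S. (lam * e i - \<theta> * c * v i)^2)"
    using gi by (intro sum.cong refl) simp
  also have "\<dots> = lam^2 * (\<Sum>i\<in>S. (e i)^2) - 2 * lam * \<theta> * c * (\<Sum>i\<in>S. e i * v i) + \<theta>^2 * c^2 * (\<Sum>i\<in>S. (v i)^2)"
    by (simp add: power2_diff sum_subtractf sum.distrib sum_distrib_left algebra_simps power_mult_distrib)
  finally have gs: "(\<Sum>i\<in>S. (g i)^2) = lam^2 - 2 * lam * \<theta> * c^2 + \<theta>^2 * c^2 * \<alpha>"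
    using e1 c al by (simp add: power2_eq_square)
  have "\<alpha> * (\<Sum>i\<in>S. (g i)^2) - lam^2 * (\<alpha> - c^2) = c^2 * (lam - \<theta> * \<alpha>)^2"
    unfolding gs by (simp add: algebra_simps power2_eq_square)
  moreover have "c^2 * (lam - \<theta> * \<alpha>)^2 \<ge> 0" by simp
  moreover have "\<alpha> * (\<Sum>i\<in>S. (g i)^2) \<le> \<alpha> * E^2" using gb al by (simp add: mult_left_mono)
  ultimately show ?thesis by linarith
qed

lemma L2_scale: "L2_set (\<lambda>i. a * f i) X = \<bar>a\<bar> * L2_set f X"
  unfolding L2_set_def
  by (simp add: power_mult_distrib sum_distrib_left[symmetric] real_sqrt_mult)

lemma L2_sub_le:
  assumes "finite B" "A \<subseteq> B" "(\<Sum>i\<in>B. (g i)^2) \<le> \<eta>^2" "\<eta> \<ge> 0"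
  shows "L2_set g A \<le> \<eta>"
proof -
  have "(\<Sum>i\<in>A. (g i)^2) \<le> (\<Sum>i\<in>B. (g i)^2)" using assms by (intro sum_mono2) auto
  then have "L2_set g A \<le> sqrt (\<eta>^2)" unfolding L2_set_def using assms(3) by (intro real_sqrt_le_mono) linarith
  then show ?thesis using assms(4) by simp
qed

lemma step_ineq:
  fixes u v g :: "nat \<Rightarrow> real"
  assumes fS: "finite S'" and fT: "finite T" and cST: "card S' = card T"
    and top: "\<forall>i\<in>S'. \<forall>j\<in>T - S'. \<bar>u j\<bar> \<le> \<bar>u i\<bar>"
    and ueq: "\<forall>i\<in>S' \<union> T. u i = a * v i + g i"
    and gb: "(\<Sum>i\<in>S' \<union> T. (g i)^2) \<le> \<eta>^2" and eta: "\<eta> \<ge> 0"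
  shows "\<bar>a\<bar> * (L2_set v T - L2_set v S') \<le> 2 * \<eta>"
proof -
  have "(\<Sum>i\<in>T. (u i)^2) \<le> (\<Sum>i\<in>S'. (u i)^2)" by (rule top_sum_ge[OF fS fT cST top])
  then have uTS: "L2_set u T \<le> L2_set u S'" unfolding L2_set_def by (rule real_sqrt_le_mono)
  have gS: "L2_set g S' \<le> \<eta>" using fS fT gb eta by (intro L2_sub_le[of "S' \<union> T"]) auto
  have gT: "L2_set g T \<le> \<eta>" using fS fT gb eta by (intro L2_sub_le[of "S' \<union> T"]) auto
  have "L2_set u S' = L2_set (\<lambda>i. a * v i + g i) S'" using ueq by (intro L2_set_cong) auto
  also have "\<dots> \<le> L2_set (\<lambda>i. a * v i) S' + L2_set g S'" by (rule L2_set_triangle_ineq)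
  finally have uS: "L2_set u S' \<le> \<bar>a\<bar> * L2_set v S' + L2_set g S'" by (simp add: L2_scale)
  have "L2_set (\<lambda>i. a * v i) T = L2_set (\<lambda>i. u i + (- g i)) T" using ueq by (intro L2_set_cong) auto
  also have "\<dots> \<le> L2_set u T + L2_set (\<lambda>i. - g i) T" by (rule L2_set_triangle_ineq)
  finally have uT: "\<bar>a\<bar> * L2_set v T \<le> L2_set u T + L2_set g T"
    by (simp add: L2_scale L2_set_def)
  show ?thesis using uTS gS gT uS uT by (simp add: algebra_simps)
qed


lemma key_num:
  fixes a D L m Mx p T :: real
  assumes a: "a \<ge> 0" and D: "D > 0" and m: "m > 0" and L: "L \<ge> 0" and T: "T > 0" and p: "p \<ge> 0"
    and Mx: "Mx \<ge> p * (1/T)^2"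
    and mh: "m \<ge> 100 * a^2 / D * Mx * L"
  shows "a * sqrt (p * L / m) \<le> sqrt D * T / 10"
proof -
  have "100 * a^2 / D * Mx * L \<ge> 100 * a^2 / D * (p * (1/T)^2) * L"
    using a D L Mx by (intro mult_right_mono mult_left_mono) auto
  then have m2: "m \<ge> (100 * a^2 * p * L) / (D * T^2)" using mh by (simp add: power_divide)
  then have m3: "100 * a^2 * p * L \<le> m * (D * T^2)" using D T by (simp add: divide_le_eq)
  have "a^2 * (p * L / m) \<le> (sqrt D * T / 10)^2"
  proof -
    have "(sqrt D * T / 10)^2 = D * T^2 / 100" using D by (simp add: power_mult_distrib power_divide)
    moreover have "a^2 * (p * L / m) \<le> D * T^2 / 100"
      using m3 m by (simp add: field_simps)
    ultimately show ?thesis by linarith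
  qed
  then have "sqrt (a^2 * (p * L / m)) \<le> sqrt ((sqrt D * T / 10)^2)" by (rule real_sqrt_le_mono)
  moreover have "sqrt (a^2 * (p * L / m)) = a * sqrt (p * L / m)"
    using a by (subst real_sqrt_mult) simp
  moreover have "sqrt ((sqrt D * T / 10)^2) = sqrt D * T / 10"
    using D T by (subst real_sqrt_abs) simp
  ultimately show ?thesis by linarith
qed

lemma sqrt_add_sq_le:
  fixes a b :: real
  assumes "a \<ge> 0" "b \<ge> 0"
  shows "sqrt (a + b^2) \<le> sqrt a + b"
proof -
  have "sqrt (a + b^2) \<le> sqrt a + sqrt (b^2)" using assms by (intro sqrt_add_le_add_sqrt) auto
  then show ?thesis using assms by simp
qed

lemma step_num:
  fixes A B P Z g s tp :: real
  assumes A: "A \<ge> 0" and B: "B \<ge> 0" and AB: "A * B \<le> 6 * P"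
    and A2: "A^2 \<ge> 8/10 * Z * g" and B2: "B^2 \<ge> W" and Wnn: "W \<ge> 0"
    and P2: "(6 * P)^2 \<le> 36/100 * g^2 * Z * W" and P: "P \<ge> 0"
    and g: "0 < g" "g < 1" and Z: "Z > 0" and Wp: "W > 0"
  shows False
proof -
  have "(A * B)^2 \<le> (6 * P)^2" using AB A B by (intro power_mono) auto
  moreover have "(A * B)^2 \<ge> (8/10 * Z * g) * W"
  proof -
    have "(A * B)^2 = A^2 * B^2" by (simp add: power_mult_distrib)
    also have "\<dots> \<ge> (8/10 * Z * g) * W" using A2 B2 Z g Wnn by (intro mult_mono) auto
    finally show ?thesis .
  qed
  ultimately have "8/10 * Z * g * W \<le> 36/100 * g^2 * Z * W" using P2 by linarith
  moreover have "8/10 * Z * g * W = (Z * g * W) * (8/10)" by (simp add: algebra_simps)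
  moreover have "36/100 * g^2 * Z * W = (Z * g * W) * (36/100 * g)" by (simp add: algebra_simps power2_eq_square)
  ultimately have ineq: "(Z * g * W) * (8/10) \<le> (Z * g * W) * (36/100 * g)" by linarith
  have Qp: "Z * g * W > 0" using Z g Wp by simp
  have "8/10 \<le> 36/100 * g" using ineq by (simp only: mult_le_cancel_left_pos[OF Qp])
  then show False using g by simp
qed


lemma main:
  fixes n m k :: nat and \<theta> \<gamma> C0 :: real and v :: "nat \<Rightarrow> real" and x :: "nat \<Rightarrow> nat \<Rightarrow> real"
    and Sseq :: "nat \<Rightarrow> nat set" and e :: "nat \<Rightarrow> nat \<Rightarrow> real" and vhat :: "nat \<Rightarrow> real"
  assumes C0: "C0 > 0" and n2: "n \<ge> 2" and m1: "m \<ge> 1" and th: "\<theta> > 0" and k1: "1 \<le> k" and kn: "k \<le> n"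
    and vz: "\<forall>i\<ge>n. v i = 0" and vn: "(\<Sum>i<n. (v i)^2) = 1" and spar: "card {i\<in>{..<n}. v i \<noteq> 0} \<le> k"
    and EV: "event_E C0 n m \<theta> (\<lambda>i j. sample_Gamma m x i j - \<theta> * v i * v j)"
    and g0: "0 < \<gamma>" and g1: "\<gamma> < 1"
    and mh: "real m \<ge> (100 * C0^2) * (1 + \<theta>)^2 / (\<theta>^2 * \<gamma>^2 * (1 - sqrt \<gamma>)^2)
                   * Max ((\<lambda>p. real p * (struct_fun v n p)^2) ` {1..k}) * ln (real n)"
    and run: "sep_run (sample_Gamma m x) n k Sseq e vhat"
  shows "sqrt (\<Sum>i\<in>Sseq k. (v i)^2) \<ge> sqrt \<gamma> \<and>
         sin_angle n vhat v \<le> sqrt (1 - \<gamma>) + (2 * C0) * (1 + \<theta>) / (\<theta> * \<gamma>) * sqrt (real k * ln (real n) / real m)"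
proof -
  define G where "G = sample_Gamma m x"
  define W where "W = (\<lambda>i j. G i j - \<theta> * v i * v j)"
  have GW: "\<forall>i j. G i j = \<theta> * v i * v j + W i j" unfolding W_def by simp
  have symG: "\<forall>i j. G i j = G j i" unfolding G_def sample_Gamma_def by (simp add: mult.commute)
  then have symGS: "\<forall>i\<in>S. \<forall>j\<in>S. G i j = G j i" for S by blast
  define E where "E = (\<lambda>q::nat. C0 * (1 + \<theta>) * sqrt (real q * ln (real n) / real m))"
  have lnn: "ln (real n) \<ge> 0" using n2 by simp
  have mpos: "real m > 0" using m1 by simp
  have E0: "E q \<ge> 0" for q unfolding E_def using C0 th lnn mpos by simp
  have Emono: "E q \<le> E q'" if "q \<le> q'" for q q'
  proof -
    have "real q * ln (real n) / real m \<le> real q' * ln (real n) / real m"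
      using that lnn mpos by (intro divide_right_mono mult_right_mono) auto
    then show ?thesis unfolding E_def using C0 th by (intro mult_left_mono real_sqrt_le_mono) auto
  qed
  have E3: "E (3*p+2) \<le> 3 * E p" if "p \<ge> 1" for p
  proof -
    have "real (3*p+2) \<le> 9 * real p" using that by simp
    then have "real (3*p+2) * (ln (real n) / real m) \<le> (9 * real p) * (ln (real n) / real m)"
      using lnn mpos by (intro mult_right_mono) auto
    moreover have "real (3*p+2) * ln (real n) / real m = real (3*p+2) * (ln (real n) / real m)" by simp
    moreover have "9 * (real p * ln (real n) / real m) = (9 * real p) * (ln (real n) / real m)" by simp
    ultimately have "sqrt (real (3*p+2) * ln (real n) / real m) \<le> sqrt (9 * (real p * ln (real n) / real m))"
      by (intro real_sqrt_le_mono) linarith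
    also have "\<dots> = sqrt 9 * sqrt (real p * ln (real n) / real m)" by (rule real_sqrt_mult)
    also have "\<dots> = 3 * sqrt (real p * ln (real n) / real m)" by simp
    finally show ?thesis unfolding E_def using C0 th
      by (metis (no_types, opaque_lifting) add_pos_pos less_eq_real_def mult.left_commute mult_left_mono mult_pos_pos zero_less_one)
  qed
  have Xspec: "spec_norm_sub W X X \<le> E (card X)" if "X \<subseteq> {..<n}" "X \<noteq> {}" for X
  proof -
    have fin: "finite X" using that finite_subset by blast
    have "card X \<le> n" using card_mono[OF _ that(1)] by simp
    moreover have "card X \<ge> 1" using fin that(2) by (simp add: Suc_le_eq card_gt_0_iff)
    ultimately show ?thesis using EV that(1) unfolding event_E_def E_def W_def G_def by auto
  qed
  have Xsb: "(\<Sum>i\<in>X. (\<Sum>j\<in>X. W i j * y j)^2) \<le> (E (card X))^2 * (\<Sum>j\<in>X. (y j)^2)"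
    if "X \<subseteq> {..<n}" "X \<noteq> {}" for X y
    using spec_bound[OF _ Xspec[OF that]] that finite_subset by blast
  have Xqb: "\<forall>y. \<bar>Qf W X y\<bar> \<le> E (card X) * (\<Sum>i\<in>X. (y i)^2)" if "X \<subseteq> {..<n}" "X \<noteq> {}" for X
    using quad_bound[OF _ Xspec[OF that] E0] that finite_subset unfolding Qf_def by blast
  define T where "T = (\<lambda>q. \<Sum>i=1..q. (sorted_abs v n ! (i-1))^2)"
  have Tset: "\<exists>Ts. Ts \<subseteq> {..<n} \<and> card Ts = q \<and> (\<forall>i\<in>Ts. \<forall>j\<in>{..<n}-Ts. \<bar>v j\<bar> \<le> \<bar>v i\<bar>)
      \<and> (\<Sum>i\<in>Ts. (v i)^2) = T q" if "q \<le> n" for q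
    using top_set[OF that, of v] unfolding T_def by blast
  have Tle1: "T q \<le> 1" if qn: "q \<le> n" for q
  proof -
    obtain Ts where Ts: "Ts \<subseteq> {..<n}" "(\<Sum>i\<in>Ts. (v i)^2) = T q" using Tset[OF qn] by blast
    have "(\<Sum>i\<in>Ts. (v i)^2) \<le> (\<Sum>i<n. (v i)^2)" using Ts(1) by (intro sum_mono2) auto
    then show ?thesis using vn Ts(2) by simp
  qed
  have Tpos: "T q > 0" if q1: "1 \<le> q" and qn: "q \<le> n" for q
  proof (rule ccontr)
    assume nT: "\<not> T q > 0"
    obtain Ts where Ts: "Ts \<subseteq> {..<n}" "card Ts = q" "\<forall>i\<in>Ts. \<forall>j\<in>{..<n}-Ts. \<bar>v j\<bar> \<le> \<bar>v i\<bar>"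
        "(\<Sum>i\<in>Ts. (v i)^2) = T q" using Tset[OF qn] by blast
    have fTs: "finite Ts" using Ts(1) finite_subset by blast
    have "(\<Sum>i\<in>Ts. (v i)^2) \<ge> 0" by (intro sum_nonneg) simp
    then have "(\<Sum>i\<in>Ts. (v i)^2) = 0" using nT Ts(4) by linarith
    then have z: "\<forall>i\<in>Ts. v i = 0" using sq_sum_zero[OF fTs] by blast
    have "Ts \<noteq> {}" using Ts(2) q1 by auto
    then obtain i0 where i0: "i0 \<in> Ts" by blast
    have "\<forall>j\<in>{..<n}. v j = 0"
    proof
      fix j assume j: "j \<in> {..<n}"
      show "v j = 0"
      proof (cases "j \<in> Ts")
        case True then show ?thesis using z by blast
      next
        case False then have "\<bar>v j\<bar> \<le> \<bar>v i0\<bar>" using Ts(3) i0 j by blast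
        then show ?thesis using z i0 by simp
      qed
    qed
    then have "(\<Sum>i<n. (v i)^2) = 0" by simp
    then show False using vn by simp
  qed
  have Tmono: "T p \<le> T (Suc p)" for p unfolding T_def by simp
  have Tk: "T k \<ge> 1"
  proof -
    obtain Ts where Ts: "Ts \<subseteq> {..<n}" "card Ts = k" "\<forall>i\<in>Ts. \<forall>j\<in>{..<n}-Ts. \<bar>v j\<bar> \<le> \<bar>v i\<bar>"
        "(\<Sum>i\<in>Ts. (v i)^2) = T k" using Tset[OF kn] by blast
    have fTs: "finite Ts" using Ts(1) finite_subset by blast
    have out: "\<forall>j\<in>{..<n}-Ts. v j = 0"
    proof (rule ccontr)
      assume "\<not> (\<forall>j\<in>{..<n}-Ts. v j = 0)"
      then obtain j where j: "j \<in> {..<n}-Ts" "v j \<noteq> 0" by blast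
      have "\<forall>i\<in>Ts. v i \<noteq> 0"
      proof
        fix i assume "i \<in> Ts"
        then have "\<bar>v j\<bar> \<le> \<bar>v i\<bar>" using Ts(3) j(1) by blast
        then show "v i \<noteq> 0" using j(2) by auto
      qed
      then have "insert j Ts \<subseteq> {i\<in>{..<n}. v i \<noteq> 0}" using j Ts(1) by auto
      then have "card (insert j Ts) \<le> card {i\<in>{..<n}. v i \<noteq> 0}" by (intro card_mono) auto
      moreover have "card (insert j Ts) = k + 1" using j(1) Ts(2) fTs by simp
      ultimately show False using spar by simp
    qed
    have "(\<Sum>i<n. (v i)^2) = (\<Sum>i\<in>Ts. (v i)^2)"
      by (rule sum.mono_neutral_right) (use Ts(1) out in auto)
    then show ?thesis using vn Ts(4) by simp
  qed
  define sg where "sg = sqrt \<gamma>"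
  have sg0: "0 < sg" and sg1: "sg < 1" and sg2: "sg^2 = \<gamma>" unfolding sg_def using g0 g1 by auto
  define D where "D = \<theta>^2 * \<gamma>^2 * (1 - sg)^2"
  have Dp: "D > 0" unfolding D_def using th g0 sg1 by simp
  have sD: "sqrt D = \<theta> * \<gamma> * (1 - sg)"
  proof -
    have "D = (\<theta> * \<gamma> * (1 - sg))^2" unfolding D_def by (simp add: power_mult_distrib)
    moreover have "\<theta> * \<gamma> * (1 - sg) \<ge> 0" using th g0 sg1 by simp
    ultimately show ?thesis by simp
  qed
  have key: "E p \<le> \<theta> * \<gamma> * (1 - sg) * T p / 10" if "1 \<le> p" "p \<le> k" for p
  proof -
    have Tp: "T p > 0" using Tpos that kn by simp
    have sf: "struct_fun v n p = 1 / T p" unfolding struct_fun_def T_def by simp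
    define Mx where "Mx = Max ((\<lambda>p. real p * (struct_fun v n p)^2) ` {1..k})"
    have "real p * (struct_fun v n p)^2 \<le> Mx" unfolding Mx_def using that by (intro Max_ge) auto
    then have Mx: "Mx \<ge> real p * (1 / T p)^2" using sf by simp
    have mh': "real m \<ge> 100 * (C0 * (1 + \<theta>))^2 / D * Mx * ln (real n)"
      using mh unfolding Mx_def D_def sg_def by (simp add: power_mult_distrib)
    have "C0 * (1 + \<theta>) * sqrt (real p * ln (real n) / real m) \<le> sqrt D * T p / 10"
      by (rule key_num[OF _ Dp mpos lnn Tp _ Mx mh']) (use C0 th in auto)
    then show ?thesis unfolding E_def sD by simp
  qed
  have inv: "p \<le> k \<longrightarrow> Sseq p \<subseteq> {..<n} \<and> card (Sseq p) = p \<and> \<gamma> * T p \<le> (\<Sum>i\<in>Sseq p. (v i)^2)"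
    if "1 \<le> p" for p
    using that
  proof (induction p rule: nat_induct_at_least)
    case base
    obtain j where j: "j < n" "Sseq 1 = {j}" and jmax: "\<forall>i<n. \<bar>G i i\<bar> \<le> \<bar>G j j\<bar>"
      using run unfolding sep_run_def G_def by blast
    have Wd: "\<bar>W i i\<bar> \<le> E 1" if "i < n" for i
    proof -
      have "{i} \<subseteq> {..<n}" using that by simp
      then have "\<bar>Qf W {i} (\<lambda>_. 1)\<bar> \<le> E (card {i}) * (\<Sum>i\<in>{i}. ((\<lambda>_. 1::real) i)^2)"
        using Xqb[of "{i}"] by blast
      then show ?thesis unfolding Qf_def by simp
    qed
    obtain Ts where Ts: "Ts \<subseteq> {..<n}" "card Ts = 1" "(\<Sum>i\<in>Ts. (v i)^2) = T 1"
      using Tset[of 1] n2 by auto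
    then obtain i0 where i0: "Ts = {i0}" by (meson card_1_singletonE)
    have i0n: "i0 < n" using Ts(1) i0 by auto
    have vi0: "(v i0)^2 = T 1" using Ts(3) i0 by simp
    have T1: "T 1 > 0" using Tpos[of 1] n2 by simp
    have "\<bar>G i0 i0\<bar> \<le> \<bar>G j j\<bar>" using jmax i0n by blast
    moreover have "G i0 i0 = \<theta> * T 1 + W i0 i0" using GW vi0 by (simp add: power2_eq_square mult.assoc)
    moreover have "G j j = \<theta> * (v j)^2 + W j j" using GW by (simp add: power2_eq_square mult.assoc)
    moreover have "\<bar>W i0 i0\<bar> \<le> E 1" "\<bar>W j j\<bar> \<le> E 1" using Wd i0n j(1) by auto
    moreover have "\<theta> * T 1 \<ge> 0" "\<theta> * (v j)^2 \<ge> 0" using th T1 by auto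
    ultimately have a1: "\<theta> * T 1 - 2 * E 1 \<le> \<theta> * (v j)^2" by linarith
    have k1': "E 1 \<le> \<theta> * \<gamma> * (1 - sg) * T 1 / 10" using key[of 1] k1 by simp
    have "\<gamma> * (1 - sg) / 5 \<le> 1 - \<gamma>"
    proof -
      have "1 - \<gamma> = (1 - sg) * (1 + sg)" using sg2 by (simp add: algebra_simps power2_eq_square)
      moreover have "(1 - sg) * (\<gamma> / 5) \<le> (1 - sg) * (1 + sg)" using sg0 sg1 g1 by (intro mult_left_mono) auto
      ultimately show ?thesis by (simp add: algebra_simps)
    qed
    then have "(\<gamma> * (1 - sg) / 5) * (\<theta> * T 1) \<le> (1 - \<gamma>) * (\<theta> * T 1)"
      using th T1 by (intro mult_right_mono) auto
    moreover have "(\<gamma> * (1 - sg) / 5) * (\<theta> * T 1) = 2 * (\<theta> * \<gamma> * (1 - sg) * T 1 / 10)"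
      by (simp add: field_simps)
    ultimately have "2 * E 1 \<le> (1 - \<gamma>) * (\<theta> * T 1)" using k1' by linarith
    then have "\<theta> * (\<gamma> * T 1) \<le> \<theta> * (v j)^2" using a1 by (simp add: algebra_simps)
    then have "\<gamma> * T 1 \<le> (v j)^2" using th by simp
    then show ?case using j by simp
  next
    case (Suc p)
    show ?case
    proof
      assume pk: "Suc p \<le> k"
      define S where "S = Sseq p"
      define S' where "S' = Sseq (Suc p)"
      have IH: "S \<subseteq> {..<n}" "card S = p" "\<gamma> * T p \<le> (\<Sum>i\<in>S. (v i)^2)"
        using Suc.IH pk unfolding S_def by auto
      have p1: "1 \<le> p" using Suc.hyps by simp
      have pkk: "p \<in> {1..<k}" using p1 pk by simp
      have te: "top_eigvec G S (e p)" and tt: "top_entries n (\<lambda>i. \<Sum>j<n. G i j * e p j) (p + 1) S'"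
        using run pkk unfolding sep_run_def G_def S_def S'_def by auto
      have S'n: "S' \<subseteq> {..<n}" and cS': "card S' = p + 1"
        and topu: "\<forall>i\<in>S'. \<forall>j\<in>{..<n}-S'. \<bar>(\<Sum>l<n. G j l * e p l)\<bar> \<le> \<bar>(\<Sum>l<n. G i l * e p l)\<bar>"
        using tt unfolding top_entries_def by auto
      have finS: "finite S" using IH(1) finite_subset by blast
      have Sne: "S \<noteq> {}" using IH(2) p1 by auto
      have Tp: "T p > 0" using Tpos[of p] p1 pk kn by simp
      have kp: "E p \<le> \<theta> * \<gamma> * (1 - sg) * T p / 10" using key[of p] p1 pk by simp
      define \<alpha> where "\<alpha> = (\<Sum>i\<in>S. (v i)^2)"
      have apos: "\<alpha> > 0" using IH(3) Tp g0 \<alpha>_def by (smt (verit) mult_pos_pos)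
      obtain lam where eq: "\<forall>i\<in>S. (\<Sum>j\<in>S. G i j * e p j) = lam * e p i"
          and lb: "\<theta> * \<alpha> - E (card S) \<le> lam"
          and cb: "lam - E (card S) \<le> \<theta> * (\<Sum>i\<in>S. e p i * v i)^2"
        using eig_facts[OF finS symGS te GW Xqb[OF IH(1) Sne] apos[unfolded \<alpha>_def]] \<alpha>_def by blast
      define c where "c = (\<Sum>i\<in>S. e p i * v i)"
      have e0: "\<forall>i. i \<notin> S \<longrightarrow> e p i = 0" and e1: "(\<Sum>i\<in>S. (e p i)^2) = 1"
        using te unfolding top_eigvec_def by auto
      define g where "g = (\<lambda>i. \<Sum>j\<in>S. W i j * e p j)"
      define u where "u = (\<lambda>i. \<Sum>j<n. G i j * e p j)"
      have ueq: "u i = \<theta> * c * v i + g i" for i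
      proof -
        have "u i = (\<Sum>j\<in>S. G i j * e p j)"
          unfolding u_def by (rule sum.mono_neutral_right) (use IH(1) e0 in auto)
        also have "\<dots> = (\<Sum>j\<in>S. \<theta> * v i * (e p j * v j) + W i j * e p j)"
          using GW by (intro sum.cong refl) (simp add: algebra_simps)
        also have "\<dots> = \<theta> * c * v i + g i"
          unfolding c_def g_def by (simp add: sum.distrib sum_distrib_left algebra_simps)
        finally show ?thesis .
      qed
      have Sp1n: "Suc p \<le> n" using pk kn by simp
      obtain Ts where Ts: "Ts \<subseteq> {..<n}" "card Ts = Suc p" "(\<Sum>i\<in>Ts. (v i)^2) = T (Suc p)"
        using Tset[OF Sp1n] by blast
      define X where "X = S \<union> S' \<union> Ts"
      have Xn: "X \<subseteq> {..<n}" unfolding X_def using IH(1) S'n Ts(1) by auto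
      have Xne: "X \<noteq> {}" unfolding X_def using Sne by auto
      have finX: "finite X" using Xn finite_subset by blast
      have cX: "card X \<le> 3 * p + 2"
      proof -
        have "card X \<le> card S + card S' + card Ts" unfolding X_def
          by (metis add_le_mono card_Un_le le_trans order_refl)
        then show ?thesis using IH(2) cS' Ts(2) by simp
      qed
      have EX: "E (card X) \<le> 3 * E p" using Emono[OF cX] E3[OF p1] by linarith
      have gX: "(\<Sum>i\<in>X. (g i)^2) \<le> (3 * E p)^2"
      proof -
        have gi: "(\<Sum>j\<in>X. W i j * e p j) = g i" for i
          unfolding g_def by (rule sum.mono_neutral_right) (use finX e0 X_def in auto)
        have eX: "(\<Sum>j\<in>X. (e p j)^2) = 1"
          using e1 by (subst sum.mono_neutral_right[of X S]) (use finX e0 X_def in auto)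
        have "(\<Sum>i\<in>X. (g i)^2) \<le> (E (card X))^2"
          using Xsb[OF Xn Xne, of "e p"] unfolding gi eX by simp
        also have "\<dots> \<le> (3 * E p)^2" using EX E0 by (intro power_mono) auto
        finally show ?thesis .
      qed
      have gb: "(\<Sum>i\<in>S' \<union> Ts. (g i)^2) \<le> (3 * E p)^2"
      proof -
        have "(\<Sum>i\<in>S' \<union> Ts. (g i)^2) \<le> (\<Sum>i\<in>X. (g i)^2)"
          using finX unfolding X_def by (intro sum_mono2) auto
        then show ?thesis using gX by linarith
      qed
      have finS': "finite S'" using S'n finite_subset by blast
      have finTs: "finite Ts" using Ts(1) finite_subset by blast
      have topu': "\<forall>i\<in>S'. \<forall>j\<in>Ts - S'. \<bar>u j\<bar> \<le> \<bar>u i\<bar>"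
        using topu Ts(1) unfolding u_def by blast
      have si: "\<bar>\<theta> * c\<bar> * (L2_set v Ts - L2_set v S') \<le> 2 * (3 * E p)"
        by (rule step_ineq[OF finS' finTs _ topu' _ gb]) (use cS' Ts(2) ueq E0 in auto)
      define T' where "T' = T (Suc p)"
      have LTs: "L2_set v Ts = sqrt T'" unfolding L2_set_def T'_def using Ts(3) by simp
      have TT: "T p \<le> T'" unfolding T'_def by (rule Tmono)
      have c2: "\<theta> * c^2 \<ge> 8/10 * (\<theta> * \<gamma> * T p)"
      proof -
        have "\<theta> * c^2 \<ge> \<theta> * \<alpha> - 2 * E p" using lb cb IH(2) c_def by simp
        moreover have "\<theta> * \<alpha> \<ge> \<theta> * (\<gamma> * T p)" using IH(3) th \<alpha>_def by simp
        moreover have "E p \<le> \<theta> * \<gamma> * T p / 10"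
        proof -
          have "\<theta> * \<gamma> * (1 - sg) * T p \<le> \<theta> * \<gamma> * 1 * T p"
            using th g0 sg0 Tp by (intro mult_right_mono mult_left_mono) auto
          then show ?thesis using kp by simp
        qed
        ultimately show ?thesis by (simp add: algebra_simps)
      qed
      have "\<gamma> * T' \<le> (\<Sum>i\<in>S'. (v i)^2)"
      proof (rule ccontr)
        assume "\<not> \<gamma> * T' \<le> (\<Sum>i\<in>S'. (v i)^2)"
        then have "sqrt (\<Sum>i\<in>S'. (v i)^2) < sqrt (\<gamma> * T')" by simp
        then have lt: "L2_set v S' < sg * sqrt T'" unfolding L2_set_def sg_def by (simp add: real_sqrt_mult)
        define A where "A = \<bar>\<theta> * c\<bar>"
        define B where "B = (1 - sg) * sqrt T'"
        have A0: "A \<ge> 0" unfolding A_def by simp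
        have B0: "B \<ge> 0" unfolding B_def using sg1 Tp TT by simp
        have "B \<le> L2_set v Ts - L2_set v S'" unfolding B_def LTs using lt by (simp add: algebra_simps)
        then have "A * B \<le> A * (L2_set v Ts - L2_set v S')" using A0 by (rule mult_left_mono)
        then have AB: "A * B \<le> 6 * E p" using si unfolding A_def by simp
        have A2: "A^2 \<ge> 8/10 * (\<theta>^2 * T p) * \<gamma>"
        proof -
          have "A^2 = \<theta> * (\<theta> * c^2)" unfolding A_def by (simp add: power_mult_distrib power2_eq_square)
          also have "\<dots> \<ge> \<theta> * (8/10 * (\<theta> * \<gamma> * T p))" using c2 th by (intro mult_left_mono) auto
          finally show ?thesis by (simp add: algebra_simps power2_eq_square)
        qed
        have B2: "B^2 \<ge> (1 - sg)^2 * T p"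
        proof -
          have "B^2 = (1 - sg)^2 * T'" unfolding B_def using Tp TT by (simp add: power_mult_distrib)
          then show ?thesis using TT by (simp add: mult_left_mono)
        qed
        have P2: "(6 * E p)^2 \<le> 36/100 * \<gamma>^2 * (\<theta>^2 * T p) * ((1 - sg)^2 * T p)"
        proof -
          have "(6 * E p)^2 \<le> (6 * (\<theta> * \<gamma> * (1 - sg) * T p / 10))^2"
          proof (rule power_mono)
            show "6 * E p \<le> 6 * (\<theta> * \<gamma> * (1 - sg) * T p / 10)" using kp by linarith
            show "0 \<le> 6 * E p" using E0[of p] by linarith
          qed
          then show ?thesis by (simp add: power_mult_distrib power2_eq_square algebra_simps)
        qed
        show False
          by (rule step_num[OF A0 B0 AB A2 B2 _ P2 E0 g0 g1]) (use th Tp sg1 in auto)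
      qed
      then show "Sseq (Suc p) \<subseteq> {..<n} \<and> card (Sseq (Suc p)) = Suc p \<and> \<gamma> * T (Suc p) \<le> (\<Sum>i\<in>Sseq (Suc p). (v i)^2)"
        using S'n cS' unfolding S'_def T'_def by simp
    qed
  qed
  define S where "S = Sseq k"
  have IS: "S \<subseteq> {..<n}" "card S = k" "\<gamma> * T k \<le> (\<Sum>i\<in>S. (v i)^2)"
    using inv[OF k1] unfolding S_def by auto
  define \<alpha> where "\<alpha> = (\<Sum>i\<in>S. (v i)^2)"
  have ag: "\<gamma> \<le> \<alpha>"
  proof -
    have "\<gamma> * 1 \<le> \<gamma> * T k" using Tk g0 by (intro mult_left_mono) auto
    then show ?thesis using IS(3) \<alpha>_def by simp
  qed
  have a1: "\<alpha> \<le> 1"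
  proof -
    have "(\<Sum>i\<in>S. (v i)^2) \<le> (\<Sum>i<n. (v i)^2)" using IS(1) by (intro sum_mono2) auto
    then show ?thesis using vn \<alpha>_def by simp
  qed
  have apos: "\<alpha> > 0" using ag g0 by simp
  have part1: "sqrt (\<Sum>i\<in>Sseq k. (v i)^2) \<ge> sqrt \<gamma>"
    using ag unfolding \<alpha>_def S_def by simp
  have finS: "finite S" using IS(1) finite_subset by blast
  have Sne: "S \<noteq> {}" using IS(2) k1 by auto
  have te: "top_eigvec G S vhat" using run unfolding sep_run_def G_def S_def by auto
  obtain lam where eq: "\<forall>i\<in>S. (\<Sum>j\<in>S. G i j * vhat j) = lam * vhat i"
      and lb: "\<theta> * \<alpha> - E (card S) \<le> lam"
    using eig_facts[OF finS symGS te GW Xqb[OF IS(1) Sne] apos[unfolded \<alpha>_def]] \<alpha>_def by blast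
  have e0: "\<forall>i. i \<notin> S \<longrightarrow> vhat i = 0" and e1: "(\<Sum>i\<in>S. (vhat i)^2) = 1"
    using te unfolding top_eigvec_def by auto
  have kk: "E k \<le> \<theta> * \<gamma> / 10"
  proof -
    have "E k \<le> \<theta> * \<gamma> * (1 - sg) * T k / 10" using key[of k] k1 by simp
    moreover have "\<theta> * \<gamma> * (1 - sg) * T k \<le> \<theta> * \<gamma> * 1 * 1"
      using th g0 sg0 sg1 Tle1[OF kn] Tk by (intro mult_mono mult_left_mono) auto
    ultimately show ?thesis by simp
  qed
  have lam2: "lam \<ge> \<theta> * \<gamma> / 2"
  proof -
    have "\<theta> * \<gamma> \<le> \<theta> * \<alpha>" using ag th by simp
    moreover have "\<theta> * \<alpha> - E k \<le> lam" using lb IS(2) by simp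
    moreover have "\<theta> * \<gamma> > 0" using th g0 by simp
    ultimately show ?thesis using kk by linarith
  qed
  have "\<theta> * \<gamma> > 0" using th g0 by simp
  then have lp: "lam > 0" using lam2 by linarith
  define c where "c = (\<Sum>i\<in>S. vhat i * v i)"
  define g where "g = (\<lambda>i. \<Sum>j\<in>S. W i j * vhat j)"
  have eig: "\<forall>i\<in>S. \<theta> * v i * c + g i = lam * vhat i"
  proof
    fix i assume i: "i \<in> S"
    have "(\<Sum>j\<in>S. G i j * vhat j) = (\<Sum>j\<in>S. \<theta> * v i * (vhat j * v j) + W i j * vhat j)"
      using GW by (intro sum.cong refl) (simp add: algebra_simps)
    also have "\<dots> = \<theta> * v i * c + g i"
      unfolding c_def g_def by (simp add: sum.distrib sum_distrib_left algebra_simps)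
    finally show "\<theta> * v i * c + g i = lam * vhat i" using eq i by simp
  qed
  have gb: "(\<Sum>i\<in>S. (g i)^2) \<le> (E k)^2"
    using Xsb[OF IS(1) Sne, of vhat] e1 IS(2) unfolding g_def by simp
  have sl: "lam^2 * (\<alpha> - c^2) \<le> \<alpha> * (E k)^2"
    by (rule sin_lemma[OF e1 eig c_def gb \<alpha>_def]) (use apos in simp)
  define b where "b = 2 * E k / (\<theta> * \<gamma>)"
  have b0: "b \<ge> 0" unfolding b_def using E0 th g0 by simp
  have ac: "\<alpha> - c^2 \<le> b^2"
  proof -
    have "lam^2 * (\<alpha> - c^2) \<le> (E k)^2"
    proof -
      have "\<alpha> * (E k)^2 \<le> 1 * (E k)^2" using a1 by (intro mult_right_mono) auto
      then show ?thesis using sl by simp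
    qed
    then have "\<alpha> - c^2 \<le> (E k)^2 / lam^2" using lp by (simp add: field_simps)
    also have "\<dots> = (E k / lam)^2" by (simp add: power_divide)
    also have "\<dots> \<le> b^2"
    proof (rule power_mono)
      show "0 \<le> E k / lam" using E0 lp by simp
      have "E k / lam \<le> E k / (\<theta> * \<gamma> / 2)"
        using E0[of k] lam2 th g0 lp by (intro divide_left_mono) auto
      then show "E k / lam \<le> b" unfolding b_def by (simp add: mult.commute)
    qed
    finally show ?thesis .
  qed
  have cs: "(\<Sum>i<n. vhat i * v i) = c"
    unfolding c_def by (rule sum.mono_neutral_right) (use IS(1) e0 in auto)
  have "sin_angle n vhat v = sqrt (1 - c^2)" unfolding sin_angle_def cs by simp
  also have "\<dots> \<le> sqrt ((1 - \<gamma>) + b^2)" using ac ag by (intro real_sqrt_le_mono) linarith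
  also have "\<dots> \<le> sqrt (1 - \<gamma>) + b" using g1 b0 by (intro sqrt_add_sq_le) auto
  also have "b = (2 * C0) * (1 + \<theta>) / (\<theta> * \<gamma>) * sqrt (real k * ln (real n) / real m)"
    unfolding b_def E_def by simp
  finally show ?thesis using part1 by simp
qed


theorem theorem1:
  assumes C0pos: "C0 > 0"
  shows "\<exists>C1 > 0. \<exists>C2 > 0.
    \<forall>(n::nat) (m::nat) (k::nat) (\<theta>::real) (v::nat \<Rightarrow> real) (x::nat \<Rightarrow> nat \<Rightarrow> real).
      n \<ge> 2 \<longrightarrow> m \<ge> 1 \<longrightarrow> \<theta> > 0 \<longrightarrow> 1 \<le> k \<longrightarrow> k \<le> n \<longrightarrow>
      (\<forall>i\<ge>n. v i = 0) \<longrightarrow> (\<Sum>i<n. (v i)^2) = 1 \<longrightarrow> card {i\<in>{..<n}. v i \<noteq> 0} \<le> k \<longrightarrow>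
      event_E C0 n m \<theta> (\<lambda>i j. sample_Gamma m x i j - \<theta> * v i * v j) \<longrightarrow>
      (\<forall>\<gamma>::real. 0 < \<gamma> \<longrightarrow> \<gamma> < 1 \<longrightarrow>
         real m \<ge> C1 * (1 + \<theta>)^2 / (\<theta>^2 * \<gamma>^2 * (1 - sqrt \<gamma>)^2)
                   * Max ((\<lambda>p. real p * (struct_fun v n p)^2) ` {1..k}) * ln (real n) \<longrightarrow>
         (\<forall>Sseq e vhat. sep_run (sample_Gamma m x) n k Sseq e vhat \<longrightarrow>
            sqrt (\<Sum>i\<in>Sseq k. (v i)^2) \<ge> sqrt \<gamma> \<and>
            sin_angle n vhat v \<le> sqrt (1 - \<gamma>)
              + C2 * (1 + \<theta>) / (\<theta> * \<gamma>) * sqrt (real k * ln (real n) / real m)))"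
proof -
  have C1: "100 * C0^2 > 0" using C0pos by simp
  have C2: "2 * C0 > 0" using C0pos by simp
  show ?thesis
    apply (rule exI[of _ "100 * C0^2"], rule conjI[OF C1])
    apply (rule exI[of _ "2 * C0"], rule conjI[OF C2])
    apply (intro allI impI)
    apply (rule main[OF C0pos])
                apply assumption+
    done
qed

end
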